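(* Let $n$ be a positive integer, $|r|<1$, and let $\alpha>0$, $\gamma,\delta\in\mathbb{R}$ satisfy $n>\gamma+1$, $n>\delta+1$ and $n>\gamma+\delta-2\alpha+1$. Consider the prior density $\pi_\alpha(\rho)=(1-\rho^2)^{\alpha-1}/\mathcal{B}(\frac12,\alpha)$ on $(-1,1)$ and the reduced likelihood \[ h_{\gamma,\delta}(n,r\mid\rho)=(1-\rho^2)^{\frac{n-\gamma-\delta-1}{2}}\Big[{}_2F_1\big(\tfrac{n-\gamma-1}{2},\tfrac{n-\delta-1}{2};\tfrac12;r^2\rho^2\big)+2r\rho W_{\gamma,\delta}(n)\,{}_2F_1\big(\tfrac{n-\gamma}{2},\tfrac{n-\delta}{2};\tfrac32;r^2\rho^2\big)\Big], \] with $W_{\gamma,\delta}(n)=\frac{\Gamma(\frac{n-\gamma}{2})\Gamma(\frac{n-\delta}{2})}{\Gamma(\frac{n-\gamma-1}{2})\Gamma(\frac{n-\delta-1}{2})}$. Then the posterior density $\pi(\rho\mid n,r)=h_{\gamma,\delta}(n,r\mid\rho)\pi_\alpha(\rho)/p^{\gamma,\delta}_\alpha(n,r)$ equals \[ \pi(\rho\mid n,r)=\frac{(1-\rho^2)^{\frac{2\alpha+n-\gamma-\delta-3}{2}}}{p^{\gamma,\delta}_\alpha(n,r)\,\mathcal{B}(\frac12,\alpha)}\Big[{}_2F_1\big(\tfrac{n-\gamma-1}{2},\tfrac{n-\delta-1}{2};\tfrac12;r^2\rho^2\big)+2r\rho W_{\gamma,\delta}(n)\,{}_2F_1\big(\tfrac{n-\gamma}{2},\tfrac{n-\delta}{2};\tfrac32;r^2\rho^2\big)\Big],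 \] where the normalizing constant $p^{\gamma,\delta}_\alpha(n,r)=\int_{-1}^1h_{\gamma,\delta}(n,r\mid\rho)\pi_\alpha(\rho)\,d\rho$ is \[ p^{\gamma,\delta}_\alpha(n,r)=\mathcal{B}\big(\tfrac12,\alpha+\tfrac{n-\gamma-\delta-1}{2}\big)\,{}_2F_1\big(\tfrac{n-\gamma-1}{2},\tfrac{n-\delta-1}{2};\alpha+\tfrac{n-\gamma-\delta}{2};r^2\big)\Big/\mathcal{B}\big(\tfrac12,\alpha\big). \] Moreover, for $k\in\mathbb{N}$ the $k$th posterior moment $E(\rho^k\mid n,r)=\int_{-1}^1\rho^k\pi(\rho\mid n,r)\,d\rho$ equals, for $k$ even, \[ \frac{\mathcal{B}\big(\tfrac12+\tfrac k2,\alpha+\tfrac{n-\gamma-\delta-1}{2}\big)\,{}_3F_2\big(\tfrac{k+1}{2},\tfrac{n-\gamma-1}{2},\tfrac{n-\delta-1}{2};\tfrac12,\tfrac{k+2\alpha+n-\gamma-\delta}{2};r^2\big)}{\mathcal{B}\big(\tfrac12,\alpha+\tfrac{n-\gamma-\delta-1}{2}\big)\,{}_2F_1\big(\tfrac{n-\gamma-1}{2},\tfrac{n-\delta-1}{2};\tfrac{2\alpha+n-\gamma-\delta}{2};r^2\big)}, \] and, for $k$ odd, \[ 2rW_{\gamma,\delta}(n)\frac{\mathcal{B}\big(\tfrac12+\tfrac{k+1}{2},\alpha+\tfrac{n-\gamma-\delta-1}{2}\big)\,{}_3F_2\big(\tfrac{k+2}{2},\tfrac{n-\gamma}{2},\tfrac{n-\delta}{2};\tfrac32,\tfrac{k+2\alpha+n-\gamma-\delta+1}{2};r^2\big)}{\mathcal{B}\big(\tfrac12,\alpha+\tfrac{n-\gamma-\delta-1}{2}\big)\,{}_2F_1\big(\tfrac{n-\gamma-1}{2},\tfrac{n-\delta-1}{2};\tfrac{2\alpha+n-\gamma-\delta}{2};r^2\big)}.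 \]
   Context: $\mathcal{B}(u,v)=\Gamma(u)\Gamma(v)/\Gamma(u+v)$ is the beta function. ${}_pF_q(a_1,\dots,a_p;b_1,\dots,b_q;z)=\sum_{m\ge0}\frac{(a_1)_m\cdots(a_p)_m}{(b_1)_m\cdots(b_q)_m\,m!}z^m$ is the generalized hypergeometric function, with $(x)_m=\Gamma(x+m)/\Gamma(x)$ the Pochhammer symbol. The function $h_{\gamma,\delta}(n,r\mid\rho)$ is (up to a factor independent of $\rho,r$) the bivariate normal likelihood of $n$ pairs with sample correlation $r$ after integrating the means against a flat prior and the standard deviations against $\sigma_1^{\gamma-1}\sigma_2^{\delta-1}$. *)

theory Defs
  imports "HOL-Analysis.Analysis"
begin

definition hypF :: "real list \<Rightarrow> real list \<Rightarrow> real \<Rightarrow> real" where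
  "hypF as bs z =
     (\<Sum>m. (\<Prod>a\<leftarrow>as. pochhammer a m) / ((\<Prod>b\<leftarrow>bs. pochhammer b m) * fact m) * z ^ m)"

definition Wgd :: "real \<Rightarrow> real \<Rightarrow> nat \<Rightarrow> real" where
  "Wgd \<gamma> \<delta> n = Gamma ((real n - \<gamma>) / 2) * Gamma ((real n - \<delta>) / 2) /
      (Gamma ((real n - \<gamma> - 1) / 2) * Gamma ((real n - \<delta> - 1) / 2))"

definition prior_alpha :: "real \<Rightarrow> real \<Rightarrow> real" where
  "prior_alpha \<alpha> \<rho> = (1 - \<rho>\<^sup>2) powr (\<alpha> - 1) / Beta (1/2) \<alpha>"

definition bracket :: "real \<Rightarrow> real \<Rightarrow> nat \<Rightarrow> real \<Rightarrow> real \<Rightarrow> real" where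
  "bracket \<gamma> \<delta> n r \<rho> =
     hypF [(real n - \<gamma> - 1) / 2, (real n - \<delta> - 1) / 2] [1/2] (r\<^sup>2 * \<rho>\<^sup>2)
     + 2 * r * \<rho> * Wgd \<gamma> \<delta> n *
       hypF [(real n - \<gamma>) / 2, (real n - \<delta>) / 2] [3/2] (r\<^sup>2 * \<rho>\<^sup>2)"

definition hlik :: "real \<Rightarrow> real \<Rightarrow> nat \<Rightarrow> real \<Rightarrow> real \<Rightarrow> real" where
  "hlik \<gamma> \<delta> n r \<rho> = (1 - \<rho>\<^sup>2) powr ((real n - \<gamma> - \<delta> - 1) / 2) * bracket \<gamma> \<delta> n r \<rho>"

definition pnorm :: "real \<Rightarrow> real \<Rightarrow> real \<Rightarrow> nat \<Rightarrow> real \<Rightarrow> real" where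
  "pnorm \<alpha> \<gamma> \<delta> n r = (LINT \<rho>:{-1<..<1}|lborel. hlik \<gamma> \<delta> n r \<rho> * prior_alpha \<alpha> \<rho>)"

definition posterior :: "real \<Rightarrow> real \<Rightarrow> real \<Rightarrow> nat \<Rightarrow> real \<Rightarrow> real \<Rightarrow> real" where
  "posterior \<alpha> \<gamma> \<delta> n r \<rho> = hlik \<gamma> \<delta> n r \<rho> * prior_alpha \<alpha> \<rho> / pnorm \<alpha> \<gamma> \<delta> n r"

definition post_moment :: "real \<Rightarrow> real \<Rightarrow> real \<Rightarrow> nat \<Rightarrow> real \<Rightarrow> nat \<Rightarrow> real" where
  "post_moment \<alpha> \<gamma> \<delta> n r k = (LINT \<rho>:{-1<..<1}|lborel. \<rho> ^ k * posterior \<alpha> \<gamma> \<delta> n r \<rho>)"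

end

theory Submission
  imports Defs "HOL-Real_Asymp.Real_Asymp"
begin

lemma powr_aux:
  fixes x :: real and k :: nat
  assumes x: "x > 0"
  shows "(x\<^sup>2) powr (real k + 1/2 - 1) * (2 * x) = 2 * x ^ (2*k)"
proof -
  have h1: "x\<^sup>2 = x powr 2" using x by (simp add: powr_numeral)
  have "(x\<^sup>2) powr (real k + 1/2 - 1) = x powr (2 * (real k + 1/2 - 1))"
    unfolding h1 by (rule powr_powr)
  also have "2 * (real k + 1/2 - 1) = real (2*k) - 1" by simp
  also have "x powr (real (2*k) - 1) = x powr real (2*k) / x powr 1" by (rule powr_diff)
  also have "x powr real (2*k) = x ^ (2*k)" using x by (rule powr_realpow)
  also have "x powr 1 = x" using x by simp
  finally have "(x\<^sup>2) powr (real k + 1/2 - 1) = x ^ (2*k) / x" .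
  thus ?thesis using x by simp
qed

lemma ind_neg01: "indicator {0..1} (-(x::real)) = (indicator {-1..0} x :: real)"
  by (auto simp: indicator_def)

lemma ind_sum3: "(x::real) \<noteq> -1 \<Longrightarrow> x \<noteq> 0 \<Longrightarrow> x \<noteq> 1 \<Longrightarrow>
   (f::real) * (indicator {-1..0} x + indicator {0..1} x) = indicator {-1<..<1} x * f"
  by (auto simp: indicator_def)

lemma beta_sub:
  fixes A :: real and k :: nat
  assumes A: "A > 0"
  shows "ennreal (Beta (real k + 1/2) A) = (\<integral>\<^sup>+x. ennreal ((\<lambda>t. t powr (real k + 1/2 - 1) * (1 - t) powr (A - 1)) (x\<^sup>2) * (2 * x) * indicator {0..1} x) \<partial>lborel)"
proof -
  define f where "f = (\<lambda>t::real. t powr (real k + 1/2 - 1) * (1 - t) powr (A - 1))"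
  have hi: "(f has_integral Beta (real k + 1/2) A) {0..1}"
    unfolding f_def using has_integral_Beta_real[of "real k + 1/2" A] A by simp
  have nn: "\<And>t. t \<in> {0..1} \<Longrightarrow> 0 \<le> f t" unfolding f_def by simp
  have sub: "(\<integral>\<^sup>+x. f x * indicator {0^2..1^2} x \<partial>lborel) = (\<integral>\<^sup>+x. f (x\<^sup>2) * (2 * x) * indicator {0..1} x \<partial>lborel)"
    apply (rule nn_integral_substitution[where g="\<lambda>x. x\<^sup>2" and g'="\<lambda>x. 2 * x"])
    subgoal unfolding set_borel_measurable_def f_def by measurable
    subgoal by (auto intro!: derivative_eq_intros)
    subgoal by (intro continuous_intros)
    subgoal by simp
    subgoal by simp
    done
  have "ennreal (Beta (real k + 1/2) A) = integral\<^sup>N lborel (\<lambda>x. indicator {0..1} x * f x)"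
    by (rule nn_integral_has_integral_lebesgue[OF nn hi, symmetric])
  also have "\<dots> = (\<integral>\<^sup>+x. f x * indicator {0^2..1^2} x \<partial>lborel)"
    by (intro nn_integral_cong) (simp add: mult.commute)
  also note sub
  finally show ?thesis unfolding f_def .
qed

lemma beta_nn:
  fixes A :: real and k :: nat
  assumes A: "A > 0"
  shows "(\<integral>\<^sup>+x. ennreal (indicator {-1<..<1} x * x ^ (2*k) * (1 - x\<^sup>2) powr (A - 1)) \<partial>lborel)
         = ennreal (Beta (real k + 1/2) A)"
proof -
  define F where "F x = x ^ (2*k) * (1 - x\<^sup>2) powr (A - 1)" for x :: real
  have Fnn: "F x \<ge> 0" for x unfolding F_def by (simp add: power_mult)
  have Fsym: "F (-x) = F x" for x unfolding F_def by simp
  have Fmeas[measurable]: "F \<in> borel_measurable borel" unfolding F_def by measurable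
  have I_eq: "(\<integral>\<^sup>+ x. ennreal (F x * indicator {0..1} x) \<partial>lborel) = (\<integral>\<^sup>+ x. ennreal (F x * indicator {-1..0} x) \<partial>lborel)"
    by (subst nn_integral_real_affine[of _ "-1" 0]) (simp_all add: Fsym ind_neg01)
  have "ennreal (Beta (real k + 1/2) A) = (\<integral>\<^sup>+x. ennreal ((x\<^sup>2) powr (real k + 1/2 - 1) * (1 - x\<^sup>2) powr (A - 1) * (2 * x) * indicator {0..1} x) \<partial>lborel)"
    using beta_sub[OF A, of k] by simp
  also have "\<dots> = (\<integral>\<^sup>+ x. 2 * ennreal (F x * indicator {0..1} x) \<partial>lborel)"
  proof -
    have pt: "ennreal ((x\<^sup>2) powr (real k + 1/2 - 1) * (1 - x\<^sup>2) powr (A - 1) * (2 * x) * indicator {0..1} x)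
          = 2 * ennreal (F x * indicator {0..1} x)" if x: "x \<noteq> 0" for x :: real
    proof (cases "x \<in> {0..1}")
      case True
      hence "x > 0" using x by auto
      have g: "\<And>p q s w i :: real. p * q = 2 * s \<Longrightarrow> p * w * q * i = 2 * (s * w * i)"
      proof -
        fix p q s w i :: real assume h: "p * q = 2 * s"
        have "p * w * q * i = (p * q) * (w * i)" by (simp only: mult_ac)
        also have "\<dots> = 2 * (s * w * i)" unfolding h by (simp only: mult_ac)
        finally show "p * w * q * i = 2 * (s * w * i)" .
      qed
      have E: "(x\<^sup>2) powr (real k + 1/2 - 1) * (1 - x\<^sup>2) powr (A - 1) * (2 * x) * indicator {0..1} x
            = 2 * (F x * indicator {0..1} x)"
        unfolding F_def by (rule g[OF powr_aux[OF \<open>x > 0\<close>]])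
      have E2: "ennreal (2 * (F x * indicator {0..1} x)) = 2 * ennreal (F x * indicator {0..1} x)"
        by (subst ennreal_mult') auto
      show ?thesis by (simp only: E E2)
    next
      case False
      thus ?thesis by simp
    qed
    show ?thesis
      by (rule nn_integral_cong_AE, rule eventually_mono[OF AE_lborel_singleton[of 0]]) (rule pt)
  qed
  also have "\<dots> = (\<integral>\<^sup>+ x. ennreal (F x * indicator {0..1} x) \<partial>lborel) +
                    (\<integral>\<^sup>+ x. ennreal (F x * indicator {0..1} x) \<partial>lborel)"
    unfolding mult_2 by (rule nn_integral_add) auto
  also have "\<dots> = (\<integral>\<^sup>+ x. ennreal (F x * indicator {-1..0} x) \<partial>lborel) + (\<integral>\<^sup>+ x. ennreal (F x * indicator {0..1} x) \<partial>lborel)"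
    by (subst (1) I_eq) (rule refl)
  also have "\<dots>
      = (\<integral>\<^sup>+ x. ennreal (F x * (indicator {-1..0} x + indicator {0..1} x)) \<partial>lborel)"
  proof -
    have pt: "ennreal (F x * indicator {-1..0} x) + ennreal (F x * indicator {0..1} x) =
              ennreal (F x * (indicator {-1..0} x + indicator{0..1} x))" for x :: real
      using Fnn[of x] by (subst ennreal_plus[symmetric]) (auto simp: distrib_left)
    show ?thesis by (subst nn_integral_add [symmetric]) (auto simp: pt)
  qed
  also have "\<dots> = (\<integral>\<^sup>+ x. ennreal (indicator {-1<..<1} x * F x) \<partial>lborel)"
  proof (rule nn_integral_cong_AE)
    have "AE x in lborel. x \<noteq> -1 \<and> x \<noteq> 0 \<and> x \<noteq> (1::real)"
      using AE_lborel_singleton[of "-1::real"] AE_lborel_singleton[of "0::real"] AE_lborel_singleton[of "1::real"]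
      by eventually_elim auto
    then show "AE x in lborel. ennreal (F x * (indicator {-1..0} x + indicator {0..1} x)) = ennreal (indicator {-1<..<1} x * F x)"
      by eventually_elim (simp add: ind_sum3)
  qed
  also have "(\<lambda>x. ennreal (indicator {-1<..<1} x * F x)) = (\<lambda>x. ennreal (indicator {-1<..<1} x * x ^ (2*k) * (1 - x\<^sup>2) powr (A - 1)))"
    unfolding F_def by (simp add: mult.assoc)
  finally show ?thesis by (simp only:)
qed

lemma beta_shift:
  fixes x y :: real
  assumes "x > 0" "y > 0"
  shows "Beta (x + real m) y = Beta x y * pochhammer x m / pochhammer (x + y) m"
proof (induction m)
  case 0 then show ?case by simp
next
  case (Suc m)
  have xm: "x + real m > 0" using assms by simp
  have nz: "x + real m \<notin> \<int>\<^sub>\<le>\<^sub>0" using xm by (auto elim!: nonpos_Ints_cases)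
  have "(x + real m + y) * Beta (x + real m + 1) y = (x + real m) * Beta (x + real m) y"
    by (rule Beta_plus1_left[OF nz])
  hence "Beta (x + real (Suc m)) y = (x + real m) * Beta (x + real m) y / (x + real m + y)"
    using xm assms by (simp add: field_simps add_ac)
  also have "\<dots> = Beta x y * pochhammer x (Suc m) / pochhammer (x + y) (Suc m)"
    unfolding Suc.IH pochhammer_Suc by (simp add: field_simps)
  finally show ?case .
qed

lemma ratio_lim:
  fixes a b c :: real
  shows "(\<lambda>m. (a + real m) * (b + real m) / ((c + real m) * (real m + 1))) \<longlonglongrightarrow> 1"
  by real_asymp

lemma hyp2_summable:
  fixes a b c z :: real
  assumes "a > 0" "b > 0" "c > 0" "0 \<le> z" "z < 1"
  shows "summable (\<lambda>m. pochhammer a m * pochhammer b m / (pochhammer c m * fact m) * z ^ m)"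
proof -
  define f where "f m = pochhammer a m * pochhammer b m / (pochhammer c m * fact m) * z ^ m" for m
  have fnn: "f m \<ge> 0" for m
  proof -
    have "pochhammer a m > 0" "pochhammer b m > 0" "pochhammer c m > 0" using assms by (simp_all add: pochhammer_pos)
    thus ?thesis unfolding f_def using assms by (intro mult_nonneg_nonneg divide_nonneg_pos mult_pos_pos) auto
  qed
  have rec: "f (Suc m) = f m * (z * ((a + real m) * (b + real m) / ((c + real m) * (real m + 1))))" for m
  proof -
    have "c + real m > 0" using assms by simp
    moreover have "pochhammer c m > 0" using assms by (simp add: pochhammer_pos)
    ultimately show ?thesis unfolding f_def pochhammer_Suc fact_Suc
      by (simp add: field_simps)
  qed
  have "(\<lambda>m. z * ((a + real m) * (b + real m) / ((c + real m) * (real m + 1)))) \<longlonglongrightarrow> z * 1"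
    by (intro tendsto_mult tendsto_const ratio_lim)
  moreover have "z * 1 < (1 + z) / 2" using assms by simp
  ultimately have "eventually (\<lambda>m. z * ((a + real m) * (b + real m) / ((c + real m) * (real m + 1))) < (1 + z) / 2) sequentially"
    by (rule order_tendstoD)
  then obtain N where N: "\<And>m. m \<ge> N \<Longrightarrow> z * ((a + real m) * (b + real m) / ((c + real m) * (real m + 1))) < (1 + z) / 2"
    by (auto simp: eventually_sequentially)
  have "summable f"
  proof (rule summable_ratio_test)
    show "(1 + z) / 2 < 1" using assms by simp
    show "norm (f (Suc n)) \<le> (1 + z) / 2 * norm (f n)" if "n \<ge> N" for n
    proof -
      define R where "R = z * ((a + real n) * (b + real n) / ((c + real n) * (real n + 1)))"
      have RN: "R < (1 + z) / 2" using N[of n] \<open>n \<ge> N\<close> unfolding R_def by simp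
      have "norm (f (Suc n)) = f (Suc n)" using fnn[of "Suc n"] by simp
      also have "\<dots> = f n * R" unfolding R_def by (rule rec)
      also have "\<dots> \<le> f n * ((1 + z) / 2)" using RN fnn[of n] by (intro mult_left_mono) auto
      also have "\<dots> = (1 + z) / 2 * norm (f n)" using fnn[of n] by simp
      finally show ?thesis .
    qed
  qed
  then show ?thesis unfolding f_def .
qed

lemma meas_w: "(\<lambda>x::real. (1 - x\<^sup>2) powr (A - 1)) \<in> borel_measurable borel"
  by measurable

lemma series_even:
  fixes c :: "nat \<Rightarrow> real" and z A :: real and j :: nat
  assumes c: "\<And>m. c m \<ge> 0" and z: "0 \<le> z" and sc: "summable (\<lambda>m. c m * z ^ m)" and A: "A > 0"
  shows "summable (\<lambda>m. c m * z ^ m * Beta (real (j + m) + 1/2) A)"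
    and "set_integrable lborel {-1<..<1}
           (\<lambda>x. x ^ (2*j) * (1 - x\<^sup>2) powr (A - 1) * (\<Sum>m. c m * (z * x\<^sup>2) ^ m))"
    and "(LINT x:{-1<..<1}|lborel. x ^ (2*j) * (1 - x\<^sup>2) powr (A - 1) * (\<Sum>m. c m * (z * x\<^sup>2) ^ m))
         = (\<Sum>m. c m * z ^ m * Beta (real (j + m) + 1/2) A)"
proof -
  define S where "S x = (\<Sum>m. c m * (z * x\<^sup>2) ^ m)" for x :: real
  define w where "w x = (1 - x\<^sup>2) powr (A - 1)" for x :: real
  define g where "g x = indicator {-1<..<1} x * x ^ (2*j) * w x * S x" for x :: real
  define S1 where "S1 = (\<Sum>m. c m * z ^ m)"
  have wnn: "w x \<ge> 0" for x unfolding w_def by simp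
  have bnd: "norm (c m * (z * x\<^sup>2) ^ m) \<le> c m * z ^ m" if "x \<in> {-1<..<1}" for x m
  proof -
    have "x\<^sup>2 \<le> 1" using that by (auto simp: abs_square_le_1)
    hence "(x\<^sup>2) ^ m \<le> 1" by (simp add: power_le_one)
    hence "z ^ m * (x\<^sup>2) ^ m \<le> z ^ m" using z by (simp add: mult_left_le)
    thus ?thesis using c[of m] z by (simp add: power_mult_distrib abs_mult mult_left_mono)
  qed
  have sx: "summable (\<lambda>m. c m * (z * x\<^sup>2) ^ m)" if "x \<in> {-1<..<1}" for x
    using sc by (rule summable_comparison_test') (rule bnd[OF that])
  have bnd2: "c m * (z * x\<^sup>2) ^ m \<le> c m * z ^ m" if "x \<in> {-1<..<1}" for x m
    using bnd[OF that, of m] by (simp add: abs_le_iff)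
  have Snn: "S x \<ge> 0" if "x \<in> {-1<..<1}" for x unfolding S_def using c z by (intro suminf_nonneg sx that) auto
  have Sle: "S x \<le> S1" if "x \<in> {-1<..<1}" for x
    unfolding S_def S1_def
    by (rule suminf_le[OF bnd2[OF that] sx[OF that] sc])
  have gnn: "g x \<ge> 0" for x
  proof (cases "x \<in> {-1<..<1}")
    case True thus ?thesis unfolding g_def using wnn[of x] Snn[OF True] by simp
  qed (simp add: g_def)
  have gmeas: "g \<in> borel_measurable lborel"
  proof (rule borel_measurable_LIMSEQ_real)
    fix x :: real
    show "(\<lambda>N. indicator {-1<..<1} x * x ^ (2*j) * w x * (\<Sum>m<N. c m * (z * x\<^sup>2) ^ m)) \<longlonglongrightarrow> g x"
    proof (cases "x \<in> {-1<..<1}")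
      case True
      show ?thesis unfolding g_def S_def
        by (intro tendsto_mult_left summable_LIMSEQ sx True)
    qed (simp add: g_def)
  next
    fix N
    show "(\<lambda>x. indicator {-1<..<1} x * x ^ (2*j) * w x * (\<Sum>m<N. c m * (z * x\<^sup>2) ^ m)) \<in> borel_measurable lborel"
      unfolding w_def by measurable
  qed
  define t where "t m x = indicator {-1<..<1} x * x ^ (2*j) * w x * (c m * (z * x\<^sup>2) ^ m)" for m x
  have tnn: "t m x \<ge> 0" for m x unfolding t_def using wnn c z
    by (auto simp: indicator_def)
  have t_eq: "t m x = (c m * z ^ m) * (indicator {-1<..<1} x * x ^ (2*(j+m)) * (1 - x\<^sup>2) powr (A - 1))" for m x
    unfolding t_def w_def by (simp add: power_mult_distrib power_add power_mult power2_eq_square algebra_simps)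
  have tint: "(\<integral>\<^sup>+x. ennreal (t m x) \<partial>lborel) = ennreal (c m * z ^ m * Beta (real (j + m) + 1/2) A)" for m
  proof -
    have "(\<integral>\<^sup>+x. ennreal (t m x) \<partial>lborel)
        = (\<integral>\<^sup>+x. ennreal (c m * z ^ m) * ennreal (indicator {-1<..<1} x * x ^ (2*(j+m)) * (1 - x\<^sup>2) powr (A - 1)) \<partial>lborel)"
      unfolding t_eq using c[of m] z by (intro nn_integral_cong ennreal_mult') simp
    also have "\<dots> = ennreal (c m * z ^ m) * (\<integral>\<^sup>+x. ennreal (indicator {-1<..<1} x * x ^ (2*(j+m)) * (1 - x\<^sup>2) powr (A - 1)) \<partial>lborel)"
      by (rule nn_integral_cmult) measurable
    also have "\<dots> = ennreal (c m * z ^ m) * ennreal (Beta (real (j + m) + 1/2) A)"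
      by (simp only: beta_nn[OF A])
    also have "\<dots> = ennreal (c m * z ^ m * Beta (real (j + m) + 1/2) A)"
      using c[of m] z by (intro ennreal_mult'[symmetric]) simp
    finally show ?thesis .
  qed
  have g_sum: "ennreal (g x) = (\<Sum>m. ennreal (t m x))" for x
  proof (cases "x \<in> {-1<..<1}")
    case True
    have "summable (\<lambda>m. t m x)" unfolding t_def
      by (intro summable_mult sx True)
    hence "(\<Sum>m. ennreal (t m x)) = ennreal (\<Sum>m. t m x)" using tnn by (intro suminf_ennreal2) auto
    also have "(\<Sum>m. t m x) = g x" unfolding t_def g_def S_def
      by (intro suminf_mult sx True)
    finally show ?thesis by simp
  qed (simp add: g_def t_def)
  have tmeas: "(\<lambda>x. ennreal (t m x)) \<in> borel_measurable lborel" for m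
    unfolding t_def w_def by measurable
  have int_sum: "(\<integral>\<^sup>+x. ennreal (g x) \<partial>lborel) = (\<Sum>m. ennreal (c m * z ^ m * Beta (real (j + m) + 1/2) A))"
    unfolding g_sum by (subst nn_integral_suminf[OF tmeas]) (simp add: tint)
  have S1nn: "S1 \<ge> 0" unfolding S1_def using c z by (intro suminf_nonneg sc) auto
  have "(\<integral>\<^sup>+x. ennreal (g x) \<partial>lborel) \<le> (\<integral>\<^sup>+x. ennreal S1 * ennreal (indicator {-1<..<1} x * x ^ (2*j) * (1 - x\<^sup>2) powr (A - 1)) \<partial>lborel)"
  proof (intro nn_integral_mono)
    fix x :: real
    show "ennreal (g x) \<le> ennreal S1 * ennreal (indicator {-1<..<1} x * x ^ (2*j) * (1 - x\<^sup>2) powr (A - 1))"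
    proof (cases "x \<in> {-1<..<1}")
      case True
      have "g x = (x ^ (2*j) * w x) * S x" using True unfolding g_def by simp
      also have "\<dots> \<le> (x ^ (2*j) * w x) * S1"
        using Sle[OF True] wnn[of x] by (intro mult_left_mono) (auto simp: zero_le_mult_iff)
      finally have "g x \<le> S1 * (indicator {-1<..<1} x * x ^ (2*j) * (1 - x\<^sup>2) powr (A - 1))"
        using True unfolding w_def by (simp add: mult_ac)
      thus ?thesis using S1nn by (simp add: ennreal_mult[symmetric] ennreal_leI)
    qed (simp add: g_def)
  qed
  also have "\<dots> = ennreal S1 * (\<integral>\<^sup>+x. ennreal (indicator {-1<..<1} x * x ^ (2*j) * (1 - x\<^sup>2) powr (A - 1)) \<partial>lborel)"
    by (rule nn_integral_cmult) measurable
  also have "\<dots> = ennreal S1 * ennreal (Beta (real j + 1/2) A)"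
    by (simp only: beta_nn[OF A])
  also have "\<dots> < top" by (simp add: ennreal_mult_less_top)
  finally have fin: "(\<integral>\<^sup>+x. ennreal (g x) \<partial>lborel) < top" .
  have Bnn: "Beta (real (j + m) + 1/2) A \<ge> 0" for m
    using A by (simp add: Beta_def Gamma_real_pos less_imp_le)
  have termnn: "c m * z ^ m * Beta (real (j + m) + 1/2) A \<ge> 0" for m
    using c[of m] z Bnn[of m] by simp
  show summ: "summable (\<lambda>m. c m * z ^ m * Beta (real (j + m) + 1/2) A)"
    using fin termnn unfolding int_sum by (intro summable_suminf_not_top) auto
  have int_val: "(\<integral>\<^sup>+x. ennreal (g x) \<partial>lborel) = ennreal (\<Sum>m. c m * z ^ m * Beta (real (j + m) + 1/2) A)"
    unfolding int_sum using termnn summ by (rule suminf_ennreal2)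
  have ig: "integrable lborel g"
    using gmeas gnn fin by (intro integrableI_nonneg) auto
  have gfun: "(\<lambda>x. indicator {-1<..<1} x *\<^sub>R (x ^ (2*j) * (1 - x\<^sup>2) powr (A - 1) * (\<Sum>m. c m * (z * x\<^sup>2) ^ m))) = g"
    by (auto simp: g_def w_def S_def fun_eq_iff)
  show "set_integrable lborel {-1<..<1}
           (\<lambda>x. x ^ (2*j) * (1 - x\<^sup>2) powr (A - 1) * (\<Sum>m. c m * (z * x\<^sup>2) ^ m))"
    unfolding set_integrable_def gfun by (rule ig)
  have "ennreal (integral\<^sup>L lborel g) = ennreal (\<Sum>m. c m * z ^ m * Beta (real (j + m) + 1/2) A)"
    using nn_integral_eq_integral[OF ig] gnn int_val by simp
  moreover have "integral\<^sup>L lborel g \<ge> 0" using gnn by (intro integral_nonneg_AE) auto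
  moreover have "(\<Sum>m. c m * z ^ m * Beta (real (j + m) + 1/2) A) \<ge> 0" using termnn by (intro suminf_nonneg summ) auto
  ultimately have "integral\<^sup>L lborel g = (\<Sum>m. c m * z ^ m * Beta (real (j + m) + 1/2) A)"
    by (simp add: ennreal_inj)
  then show "(LINT x:{-1<..<1}|lborel. x ^ (2*j) * (1 - x\<^sup>2) powr (A - 1) * (\<Sum>m. c m * (z * x\<^sup>2) ^ m))
         = (\<Sum>m. c m * z ^ m * Beta (real (j + m) + 1/2) A)"
    unfolding set_lebesgue_integral_def gfun .
qed

lemma series_odd:
  fixes c :: "nat \<Rightarrow> real" and z A :: real and j :: nat
  assumes c: "\<And>m. c m \<ge> 0" and z: "0 \<le> z" and sc: "summable (\<lambda>m. c m * z ^ m)" and A: "A > 0"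
  shows "set_integrable lborel {-1<..<1}
           (\<lambda>x. x ^ (2*j+1) * (1 - x\<^sup>2) powr (A - 1) * (\<Sum>m. c m * (z * x\<^sup>2) ^ m))"
    and "(LINT x:{-1<..<1}|lborel. x ^ (2*j+1) * (1 - x\<^sup>2) powr (A - 1) * (\<Sum>m. c m * (z * x\<^sup>2) ^ m)) = 0"
proof -
  define G where "G x = indicator {-1<..<1} x *\<^sub>R (x ^ (2*j) * (1 - x\<^sup>2) powr (A - 1) * (\<Sum>m. c m * (z * x\<^sup>2) ^ m))" for x :: real
  define H where "H x = indicator {-1<..<1} x *\<^sub>R (x ^ (2*j+1) * (1 - x\<^sup>2) powr (A - 1) * (\<Sum>m. c m * (z * x\<^sup>2) ^ m))" for x :: real
  have iG: "integrable lborel G"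
    using series_even(2)[OF c z sc A, of j] unfolding set_integrable_def G_def .
  have HG: "H x = x * G x" for x unfolding H_def G_def by (simp add: algebra_simps)
  have Hmeas: "H \<in> borel_measurable lborel"
    unfolding HG[abs_def] using borel_measurable_integrable[OF iG] by measurable
  have iH: "integrable lborel H"
  proof (rule Bochner_Integration.integrable_bound[OF iG Hmeas])
    show "AE x in lborel. norm (H x) \<le> norm (G x)"
    proof (intro AE_I2)
      fix x :: real
      show "norm (H x) \<le> norm (G x)"
      proof (cases "x \<in> {-1<..<1}")
        case True
        hence "\<bar>x\<bar> \<le> 1" by auto
        hence "\<bar>x\<bar> * \<bar>G x\<bar> \<le> 1 * \<bar>G x\<bar>" by (intro mult_right_mono) auto
        thus ?thesis unfolding HG by (simp add: abs_mult)
      qed (simp add: H_def G_def)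
    qed
  qed
  show "set_integrable lborel {-1<..<1}
           (\<lambda>x. x ^ (2*j+1) * (1 - x\<^sup>2) powr (A - 1) * (\<Sum>m. c m * (z * x\<^sup>2) ^ m))"
    unfolding set_integrable_def using iH unfolding H_def .
  have Hodd: "H (-x) = - H x" for x
  proof -
    have "indicator {-1<..<1} (-x) = (indicator {-1<..<1} x :: real)" by (auto simp: indicator_def)
    thus ?thesis by (simp add: H_def)
  qed
  have "integral\<^sup>L lborel H = \<bar>-1\<bar> *\<^sub>R integral\<^sup>L lborel (\<lambda>x. H (0 + (-1) * x))"
    by (rule lborel_integral_real_affine) simp
  also have "\<dots> = - integral\<^sup>L lborel H" by (simp add: Hodd)
  finally have "integral\<^sup>L lborel H = 0" by simp
  thus "(LINT x:{-1<..<1}|lborel. x ^ (2*j+1) * (1 - x\<^sup>2) powr (A - 1) * (\<Sum>m. c m * (z * x\<^sup>2) ^ m)) = 0"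
    unfolding set_lebesgue_integral_def H_def .
qed

lemma Beta_pos: "x > 0 \<Longrightarrow> y > 0 \<Longrightarrow> Beta x (y::real) > 0"
  by (simp add: Beta_def Gamma_real_pos)

lemma sum_to_hypF3:
  fixes p q s x A z :: real
  assumes x: "x > 0" and A: "A > 0" and s: "s > 0"
    and sm: "summable (\<lambda>m. pochhammer p m * pochhammer q m / (pochhammer s m * fact m) * z ^ m * Beta (x + real m) A)"
  shows "(\<Sum>m. pochhammer p m * pochhammer q m / (pochhammer s m * fact m) * z ^ m * Beta (x + real m) A)
         = Beta x A * hypF [x, p, q] [s, x + A] z"
proof -
  have pxA: "pochhammer (x + A) m > 0" for m using x A by (simp add: pochhammer_pos)
  have pS: "pochhammer s m > 0" for m using s by (simp add: pochhammer_pos)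
  have eq: "pochhammer p m * pochhammer q m / (pochhammer s m * fact m) * z ^ m * Beta (x + real m) A
        = Beta x A * (pochhammer x m * (pochhammer p m * pochhammer q m) / (pochhammer s m * pochhammer (x + A) m * fact m) * z ^ m)" for m
    unfolding beta_shift[OF x A] using pxA[of m] pS[of m] by (simp add: field_simps)
  have "summable (\<lambda>m. Beta x A * (pochhammer x m * (pochhammer p m * pochhammer q m) / (pochhammer s m * pochhammer (x + A) m * fact m) * z ^ m))"
    using sm unfolding eq .
  hence sm2: "summable (\<lambda>m. pochhammer x m * (pochhammer p m * pochhammer q m) / (pochhammer s m * pochhammer (x + A) m * fact m) * z ^ m)"
    by (rule summable_mult_D) (use Beta_pos[OF x A] in simp)
  have hf: "(\<lambda>m. (\<Prod>a\<leftarrow>[x,p,q]. pochhammer a m) / ((\<Prod>b\<leftarrow>[s,x+A]. pochhammer b m) * fact m) * z^m)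
     = (\<lambda>m. pochhammer x m * (pochhammer p m * pochhammer q m) / (pochhammer s m * pochhammer (x + A) m * fact m) * z ^ m)"
    by (simp add: fun_eq_iff mult_ac)
  show ?thesis by (simp only: eq suminf_mult[OF sm2] hypF_def hf)
qed

lemma sum_to_hypF2:
  fixes p q x A z :: real
  assumes x: "x > 0" and A: "A > 0"
    and sm: "summable (\<lambda>m. pochhammer p m * pochhammer q m / (pochhammer x m * fact m) * z ^ m * Beta (x + real m) A)"
  shows "(\<Sum>m. pochhammer p m * pochhammer q m / (pochhammer x m * fact m) * z ^ m * Beta (x + real m) A)
         = Beta x A * hypF [p, q] [x + A] z"
proof -
  have pxA: "pochhammer (x + A) m > 0" for m using x A by (simp add: pochhammer_pos)
  have pS: "pochhammer x m > 0" for m using x by (simp add: pochhammer_pos)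
  have eq: "pochhammer p m * pochhammer q m / (pochhammer x m * fact m) * z ^ m * Beta (x + real m) A
        = Beta x A * (pochhammer p m * pochhammer q m / (pochhammer (x + A) m * fact m) * z ^ m)" for m
    unfolding beta_shift[OF x A] using pxA[of m] pS[of m] by (simp add: field_simps)
  have "summable (\<lambda>m. Beta x A * (pochhammer p m * pochhammer q m / (pochhammer (x + A) m * fact m) * z ^ m))"
    using sm unfolding eq .
  hence sm2: "summable (\<lambda>m. pochhammer p m * pochhammer q m / (pochhammer (x + A) m * fact m) * z ^ m)"
    by (rule summable_mult_D) (use Beta_pos[OF x A] in simp)
  have hf: "(\<lambda>m. (\<Prod>a\<leftarrow>[p,q]. pochhammer a m) / ((\<Prod>b\<leftarrow>[x+A]. pochhammer b m) * fact m) * z^m)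
     = (\<lambda>m. pochhammer p m * pochhammer q m / (pochhammer (x + A) m * fact m) * z ^ m)"
    by (simp add: fun_eq_iff mult_ac)
  show ?thesis by (simp only: eq suminf_mult[OF sm2] hypF_def hf)
qed

lemma pow_comb: "e1 + e2 = e3 \<Longrightarrow> (t::real) powr e1 * t powr e2 = t powr e3"
  by (simp add: powr_add[symmetric])

lemma aux_post: "p1 * p2 = (q::real) \<Longrightarrow> p1 * br * (p2 / B) / p = q / (p * B) * br"
  by (simp add: divide_inverse mult_ac flip: inverse_mult_distrib)

lemma aux_HP:
  assumes "p1 * p2 = (w::real)" "B \<noteq> 0"
  shows "p1 * (s1 + 2 * r * x * W * s2) * (p2 / B) = (1/B) * (w * s1 + (2*r*W) * (x * w * s2))"
  using assms(2) unfolding assms(1)[symmetric] by (simp add: field_simps)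

lemma aux_div: "(B::real) \<noteq> 0 \<Longrightarrow> (1/(Y/B)) * ((1/B) * X) = X / Y"
  by (cases "Y = 0") (simp_all add: field_simps)

lemma aux_div2: "(B::real) \<noteq> 0 \<Longrightarrow> (1/(Y/B)) * ((1/B) * (K * X)) = K * (X / Y)"
  by (cases "Y = 0") (simp_all add: field_simps)

theorem mainTheorem3:
  fixes n :: nat and r \<alpha> \<gamma> \<delta> :: real
  assumes "n > 0" and "\<bar>r\<bar> < 1" and "\<alpha> > 0"
    and "real n > \<gamma> + 1" and "real n > \<delta> + 1" and "real n > \<gamma> + \<delta> - 2 * \<alpha> + 1"
  shows
    "(pnorm \<alpha> \<gamma> \<delta> n r =
       Beta (1/2) (\<alpha> + (real n - \<gamma> - \<delta> - 1) / 2) *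
       hypF [(real n - \<gamma> - 1) / 2, (real n - \<delta> - 1) / 2] [\<alpha> + (real n - \<gamma> - \<delta>) / 2] (r\<^sup>2)
       / Beta (1/2) \<alpha>)
   \<and> (\<forall>\<rho>\<in>{-1<..<1}. posterior \<alpha> \<gamma> \<delta> n r \<rho> =
       (1 - \<rho>\<^sup>2) powr ((2 * \<alpha> + real n - \<gamma> - \<delta> - 3) / 2) /
       (pnorm \<alpha> \<gamma> \<delta> n r * Beta (1/2) \<alpha>) *
       (hypF [(real n - \<gamma> - 1) / 2, (real n - \<delta> - 1) / 2] [1/2] (r\<^sup>2 * \<rho>\<^sup>2)
        + 2 * r * \<rho> * Wgd \<gamma> \<delta> n *
          hypF [(real n - \<gamma>) / 2, (real n - \<delta>) / 2] [3/2] (r\<^sup>2 * \<rho>\<^sup>2)))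
   \<and> (\<forall>k::nat. even k \<longrightarrow> post_moment \<alpha> \<gamma> \<delta> n r k =
       Beta (1/2 + real k / 2) (\<alpha> + (real n - \<gamma> - \<delta> - 1) / 2) *
       hypF [(real k + 1) / 2, (real n - \<gamma> - 1) / 2, (real n - \<delta> - 1) / 2]
            [1/2, (real k + 2 * \<alpha> + real n - \<gamma> - \<delta>) / 2] (r\<^sup>2)
       / (Beta (1/2) (\<alpha> + (real n - \<gamma> - \<delta> - 1) / 2) *
          hypF [(real n - \<gamma> - 1) / 2, (real n - \<delta> - 1) / 2]
               [(2 * \<alpha> + real n - \<gamma> - \<delta>) / 2] (r\<^sup>2)))
   \<and> (\<forall>k::nat. odd k \<longrightarrow> post_moment \<alpha> \<gamma> \<delta> n r k =
       2 * r * Wgd \<gamma> \<delta> n *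
       (Beta (1/2 + (real k + 1) / 2) (\<alpha> + (real n - \<gamma> - \<delta> - 1) / 2) *
        hypF [(real k + 2) / 2, (real n - \<gamma>) / 2, (real n - \<delta>) / 2]
             [3/2, (real k + 2 * \<alpha> + real n - \<gamma> - \<delta> + 1) / 2] (r\<^sup>2)
        / (Beta (1/2) (\<alpha> + (real n - \<gamma> - \<delta> - 1) / 2) *
           hypF [(real n - \<gamma> - 1) / 2, (real n - \<delta> - 1) / 2]
                [(2 * \<alpha> + real n - \<gamma> - \<delta>) / 2] (r\<^sup>2))))"
proof -
  define a where "a = (real n - \<gamma> - 1) / 2"
  define b where "b = (real n - \<delta> - 1) / 2"
  define a2 where "a2 = (real n - \<gamma>) / 2"
  define b2 where "b2 = (real n - \<delta>) / 2"
  define A where "A = \<alpha> + (real n - \<gamma> - \<delta> - 1) / 2"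
  define z where "z = r\<^sup>2"
  define W where "W = Wgd \<gamma> \<delta> n"
  define B where "B = Beta (1/2) \<alpha>"
  define c1 where "c1 m = pochhammer a m * pochhammer b m / (pochhammer (1/2) m * fact m)" for m
  define c2 where "c2 m = pochhammer a2 m * pochhammer b2 m / (pochhammer (3/2) m * fact m)" for m
  define S1 where "S1 x = (\<Sum>m. c1 m * (z * x\<^sup>2) ^ m)" for x :: real
  define S2 where "S2 x = (\<Sum>m. c2 m * (z * x\<^sup>2) ^ m)" for x :: real
  define w where "w x = (1 - x\<^sup>2) powr (A - 1)" for x :: real
  define p where "p = pnorm \<alpha> \<gamma> \<delta> n r"
  have apos: "a > 0" "b > 0" "a2 > 0" "b2 > 0" "A > 0"
    using assms unfolding a_def b_def a2_def b2_def A_def by (simp_all add: field_simps)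
  have z0: "0 \<le> z" and z1: "z < 1" unfolding z_def using assms(2) by (auto simp: abs_square_less_1)
  have Bpos: "B > 0" unfolding B_def using assms(3) by (rule Beta_pos[rotated]) simp
  hence Bnz: "B \<noteq> 0" by simp
  have c1nn: "c1 m \<ge> 0" for m unfolding c1_def using apos
    by (intro divide_nonneg_pos mult_nonneg_nonneg mult_pos_pos less_imp_le[OF pochhammer_pos]) (auto simp: pochhammer_pos)
  have c2nn: "c2 m \<ge> 0" for m unfolding c2_def using apos
    by (intro divide_nonneg_pos mult_nonneg_nonneg mult_pos_pos less_imp_le[OF pochhammer_pos]) (auto simp: pochhammer_pos)
  have sc1: "summable (\<lambda>m. c1 m * z ^ m)" unfolding c1_def
    by (rule hyp2_summable) (use apos z0 z1 in auto)
  have sc2: "summable (\<lambda>m. c2 m * z ^ m)" unfolding c2_def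
    by (rule hyp2_summable) (use apos z0 z1 in auto)
  have F1: "hypF [(real n - \<gamma> - 1) / 2, (real n - \<delta> - 1) / 2] [1/2] (r\<^sup>2 * x\<^sup>2) = S1 x" for x
    unfolding hypF_def S1_def c1_def a_def b_def z_def by (simp add: mult_ac)
  have F2: "hypF [(real n - \<gamma>) / 2, (real n - \<delta>) / 2] [3/2] (r\<^sup>2 * x\<^sup>2) = S2 x" for x
    unfolding hypF_def S2_def c2_def a2_def b2_def z_def by (simp add: mult_ac)
  have pw: "(1 - x\<^sup>2) powr ((real n - \<gamma> - \<delta> - 1) / 2) * (1 - x\<^sup>2) powr (\<alpha> - 1) = w x" for x
    unfolding w_def A_def by (rule pow_comb) (simp add: field_simps)
  have HP: "hlik \<gamma> \<delta> n r x * prior_alpha \<alpha> x = (1/B) * (w x * S1 x + (2*r*W) * (x * w x * S2 x))" for x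
    unfolding hlik_def prior_alpha_def bracket_def F1 F2 W_def[symmetric] B_def[symmetric]
    by (rule aux_HP[OF pw Bnz])
  have part2: "\<forall>\<rho>\<in>{-1<..<1}. posterior \<alpha> \<gamma> \<delta> n r \<rho> =
       (1 - \<rho>\<^sup>2) powr ((2 * \<alpha> + real n - \<gamma> - \<delta> - 3) / 2) /
       (pnorm \<alpha> \<gamma> \<delta> n r * Beta (1/2) \<alpha>) *
       (hypF [(real n - \<gamma> - 1) / 2, (real n - \<delta> - 1) / 2] [1/2] (r\<^sup>2 * \<rho>\<^sup>2)
        + 2 * r * \<rho> * Wgd \<gamma> \<delta> n *
          hypF [(real n - \<gamma>) / 2, (real n - \<delta>) / 2] [3/2] (r\<^sup>2 * \<rho>\<^sup>2))"
  proof
    fix \<rho> :: real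
    have "(1 - \<rho>\<^sup>2) powr ((real n - \<gamma> - \<delta> - 1) / 2) * (1 - \<rho>\<^sup>2) powr (\<alpha> - 1)
          = (1 - \<rho>\<^sup>2) powr ((2 * \<alpha> + real n - \<gamma> - \<delta> - 3) / 2)"
      by (rule pow_comb) (simp add: field_simps)
    then show "posterior \<alpha> \<gamma> \<delta> n r \<rho> =
       (1 - \<rho>\<^sup>2) powr ((2 * \<alpha> + real n - \<gamma> - \<delta> - 3) / 2) /
       (pnorm \<alpha> \<gamma> \<delta> n r * Beta (1/2) \<alpha>) *
       (hypF [(real n - \<gamma> - 1) / 2, (real n - \<delta> - 1) / 2] [1/2] (r\<^sup>2 * \<rho>\<^sup>2)
        + 2 * r * \<rho> * Wgd \<gamma> \<delta> n *
          hypF [(real n - \<gamma>) / 2, (real n - \<delta>) / 2] [3/2] (r\<^sup>2 * \<rho>\<^sup>2))"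
      unfolding posterior_def hlik_def prior_alpha_def bracket_def
      by (rule aux_post)
  qed
  have ie: "set_integrable lborel {-1<..<1} (\<lambda>x. x ^ (2*j) * w x * S1 x)"
    and Ie: "(LINT x:{-1<..<1}|lborel. x ^ (2*j) * w x * S1 x) = (\<Sum>m. c1 m * z ^ m * Beta (real (j + m) + 1/2) A)"
    and se: "summable (\<lambda>m. c1 m * z ^ m * Beta (real (j + m) + 1/2) A)" for j
    using series_even[OF c1nn z0 sc1 apos(5), of j] unfolding w_def S1_def by auto
  have ie2: "set_integrable lborel {-1<..<1} (\<lambda>x. x ^ (2*j) * w x * S2 x)"
    and Ie2: "(LINT x:{-1<..<1}|lborel. x ^ (2*j) * w x * S2 x) = (\<Sum>m. c2 m * z ^ m * Beta (real (j + m) + 1/2) A)"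
    and se2: "summable (\<lambda>m. c2 m * z ^ m * Beta (real (j + m) + 1/2) A)" for j
    using series_even[OF c2nn z0 sc2 apos(5), of j] unfolding w_def S2_def by auto
  have io: "set_integrable lborel {-1<..<1} (\<lambda>x. x ^ (2*j+1) * w x * S1 x)"
    and Io: "(LINT x:{-1<..<1}|lborel. x ^ (2*j+1) * w x * S1 x) = 0" for j
    using series_odd[OF c1nn z0 sc1 apos(5), of j] unfolding w_def S1_def by auto
  have io2: "set_integrable lborel {-1<..<1} (\<lambda>x. x ^ (2*j+1) * w x * S2 x)"
    and Io2: "(LINT x:{-1<..<1}|lborel. x ^ (2*j+1) * w x * S2 x) = 0" for j
    using series_odd[OF c2nn z0 sc2 apos(5), of j] unfolding w_def S2_def by auto
  have E1: "(LINT x:{-1<..<1}|lborel. x ^ (2*j) * (hlik \<gamma> \<delta> n r x * prior_alpha \<alpha> x))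
            = (1/B) * (\<Sum>m. c1 m * z ^ m * Beta (real (j + m) + 1/2) A)" for j
  proof -
    have "(LINT x:{-1<..<1}|lborel. x ^ (2*j) * (hlik \<gamma> \<delta> n r x * prior_alpha \<alpha> x))
        = (LINT x:{-1<..<1}|lborel. (1/B) * (x ^ (2*j) * w x * S1 x + (2*r*W) * (x ^ (2*j+1) * w x * S2 x)))"
      unfolding HP by (rule set_lebesgue_integral_cong) (auto simp: algebra_simps power_add)
    also have "\<dots> = (1/B) * ((LINT x:{-1<..<1}|lborel. x ^ (2*j) * w x * S1 x) + (2*r*W) * (LINT x:{-1<..<1}|lborel. x ^ (2*j+1) * w x * S2 x))"
      by (simp only: set_integral_mult_right set_integral_add(2)[OF ie set_integrable_mult_right[OF io2]])
    also have "\<dots> = (1/B) * (\<Sum>m. c1 m * z ^ m * Beta (real (j + m) + 1/2) A)"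
      by (simp only: Ie Io2) simp
    finally show ?thesis .
  qed
  have O1: "(LINT x:{-1<..<1}|lborel. x ^ (2*j+1) * (hlik \<gamma> \<delta> n r x * prior_alpha \<alpha> x))
            = (1/B) * ((2*r*W) * (\<Sum>m. c2 m * z ^ m * Beta (real (Suc j + m) + 1/2) A))" for j
  proof -
    have "(LINT x:{-1<..<1}|lborel. x ^ (2*j+1) * (hlik \<gamma> \<delta> n r x * prior_alpha \<alpha> x))
        = (LINT x:{-1<..<1}|lborel. (1/B) * (x ^ (2*j+1) * w x * S1 x + (2*r*W) * (x ^ (2*Suc j) * w x * S2 x)))"
      unfolding HP by (rule set_lebesgue_integral_cong) (auto simp: algebra_simps power_add power2_eq_square)
    also have "\<dots> = (1/B) * ((LINT x:{-1<..<1}|lborel. x ^ (2*j+1) * w x * S1 x) + (2*r*W) * (LINT x:{-1<..<1}|lborel. x ^ (2*Suc j) * w x * S2 x))"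
      by (simp only: set_integral_mult_right set_integral_add(2)[OF io set_integrable_mult_right[OF ie2]])
    also have "\<dots> = (1/B) * ((2*r*W) * (\<Sum>m. c2 m * z ^ m * Beta (real (Suc j + m) + 1/2) A))"
      by (simp only: Io Ie2) simp
    finally show ?thesis .
  qed
  have BB: "Beta (real (j + m) + 1/2) A = Beta ((real j + 1/2) + real m) A" for j m
    by (rule arg_cong[where f="\<lambda>t. Beta t A"]) simp
  have "p = (1/B) * (\<Sum>m. c1 m * z ^ m * Beta (real (0 + m) + 1/2) A)"
    using E1[of 0] unfolding p_def pnorm_def by simp
  also have "(\<Sum>m. c1 m * z ^ m * Beta (real (0 + m) + 1/2) A) = Beta (1/2) A * hypF [a, b] [1/2 + A] z"
    using sum_to_hypF2[of "1/2" A a b z] se[of 0] apos(5) unfolding BB c1_def by simp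
  finally have P: "p = Beta (1/2) A * hypF [a, b] [\<alpha> + (real n - \<gamma> - \<delta>) / 2] z / B"
    unfolding A_def by (simp add: field_simps)
  have part1: "pnorm \<alpha> \<gamma> \<delta> n r =
       Beta (1/2) (\<alpha> + (real n - \<gamma> - \<delta> - 1) / 2) *
       hypF [(real n - \<gamma> - 1) / 2, (real n - \<delta> - 1) / 2] [\<alpha> + (real n - \<gamma> - \<delta>) / 2] (r\<^sup>2)
       / Beta (1/2) \<alpha>"
    using P unfolding p_def A_def a_def b_def z_def B_def .
  have PM: "post_moment \<alpha> \<gamma> \<delta> n r k = (1/p) * (LINT x:{-1<..<1}|lborel. x ^ k * (hlik \<gamma> \<delta> n r x * prior_alpha \<alpha> x))" for k
  proof -
    have "(\<lambda>x. x ^ k * posterior \<alpha> \<gamma> \<delta> n r x) = (\<lambda>x. (1/p) * (x ^ k * (hlik \<gamma> \<delta> n r x * prior_alpha \<alpha> x)))"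
      unfolding posterior_def p_def by (simp add: fun_eq_iff divide_inverse mult_ac)
    thus ?thesis unfolding post_moment_def by simp
  qed
  have part3: "\<forall>k::nat. even k \<longrightarrow> post_moment \<alpha> \<gamma> \<delta> n r k =
       Beta (1/2 + real k / 2) (\<alpha> + (real n - \<gamma> - \<delta> - 1) / 2) *
       hypF [(real k + 1) / 2, (real n - \<gamma> - 1) / 2, (real n - \<delta> - 1) / 2]
            [1/2, (real k + 2 * \<alpha> + real n - \<gamma> - \<delta>) / 2] (r\<^sup>2)
       / (Beta (1/2) (\<alpha> + (real n - \<gamma> - \<delta> - 1) / 2) *
          hypF [(real n - \<gamma> - 1) / 2, (real n - \<delta> - 1) / 2]
               [(2 * \<alpha> + real n - \<gamma> - \<delta>) / 2] (r\<^sup>2))"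
  proof (intro allI impI)
    fix k :: nat assume "even k"
    then obtain j where k: "k = 2 * j" by (auto elim: evenE)
    have S: "(\<Sum>m. c1 m * z ^ m * Beta (real (j + m) + 1/2) A) = Beta (real j + 1/2) A * hypF [real j + 1/2, a, b] [1/2, real j + 1/2 + A] z"
      using sum_to_hypF3[of "real j + 1/2" A "1/2" a b z] se[of j] apos(5) unfolding BB c1_def by simp
    have "post_moment \<alpha> \<gamma> \<delta> n r k = (1/p) * ((1/B) * (Beta (real j + 1/2) A * hypF [real j + 1/2, a, b] [1/2, real j + 1/2 + A] z))"
      unfolding PM k E1 S ..
    also have "\<dots> = Beta (real j + 1/2) A * hypF [real j + 1/2, a, b] [1/2, real j + 1/2 + A] z /
                    (Beta (1/2) A * hypF [a, b] [\<alpha> + (real n - \<gamma> - \<delta>) / 2] z)"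
      unfolding P by (rule aux_div[OF Bnz])
    finally have R: "post_moment \<alpha> \<gamma> \<delta> n r k = \<dots>" .
    have e1: "1/2 + real k / 2 = real j + 1/2" "(real k + 1) / 2 = real j + 1/2"
      "(real k + 2 * \<alpha> + real n - \<gamma> - \<delta>) / 2 = real j + 1/2 + A"
      "(2 * \<alpha> + real n - \<gamma> - \<delta>) / 2 = \<alpha> + (real n - \<gamma> - \<delta>) / 2"
      unfolding k A_def by (simp_all add: field_simps)
    show "post_moment \<alpha> \<gamma> \<delta> n r k =
       Beta (1/2 + real k / 2) (\<alpha> + (real n - \<gamma> - \<delta> - 1) / 2) *
       hypF [(real k + 1) / 2, (real n - \<gamma> - 1) / 2, (real n - \<delta> - 1) / 2]
            [1/2, (real k + 2 * \<alpha> + real n - \<gamma> - \<delta>) / 2] (r\<^sup>2)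
       / (Beta (1/2) (\<alpha> + (real n - \<gamma> - \<delta> - 1) / 2) *
          hypF [(real n - \<gamma> - 1) / 2, (real n - \<delta> - 1) / 2]
               [(2 * \<alpha> + real n - \<gamma> - \<delta>) / 2] (r\<^sup>2))"
      unfolding e1 R unfolding A_def a_def b_def z_def ..
  qed
  have part4: "\<forall>k::nat. odd k \<longrightarrow> post_moment \<alpha> \<gamma> \<delta> n r k =
       2 * r * Wgd \<gamma> \<delta> n *
       (Beta (1/2 + (real k + 1) / 2) (\<alpha> + (real n - \<gamma> - \<delta> - 1) / 2) *
        hypF [(real k + 2) / 2, (real n - \<gamma>) / 2, (real n - \<delta>) / 2]
             [3/2, (real k + 2 * \<alpha> + real n - \<gamma> - \<delta> + 1) / 2] (r\<^sup>2)
        / (Beta (1/2) (\<alpha> + (real n - \<gamma> - \<delta> - 1) / 2) *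
           hypF [(real n - \<gamma> - 1) / 2, (real n - \<delta> - 1) / 2]
                [(2 * \<alpha> + real n - \<gamma> - \<delta>) / 2] (r\<^sup>2)))"
  proof (intro allI impI)
    fix k :: nat assume "odd k"
    then obtain j where k: "k = 2 * j + 1" by (auto elim: oddE)
    have S: "(\<Sum>m. c2 m * z ^ m * Beta (real (Suc j + m) + 1/2) A) = Beta (real (Suc j) + 1/2) A * hypF [real (Suc j) + 1/2, a2, b2] [3/2, real (Suc j) + 1/2 + A] z"
      using sum_to_hypF3[of "real (Suc j) + 1/2" A "3/2" a2 b2 z] se2[of "Suc j"] apos(5)
      unfolding BB c2_def by simp
    have "post_moment \<alpha> \<gamma> \<delta> n r k = (1/p) * ((1/B) * ((2*r*W) * (Beta (real (Suc j) + 1/2) A * hypF [real (Suc j) + 1/2, a2, b2] [3/2, real (Suc j) + 1/2 + A] z)))"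
      unfolding PM k O1 S ..
    also have "\<dots> = (2*r*W) * (Beta (real (Suc j) + 1/2) A * hypF [real (Suc j) + 1/2, a2, b2] [3/2, real (Suc j) + 1/2 + A] z /
                    (Beta (1/2) A * hypF [a, b] [\<alpha> + (real n - \<gamma> - \<delta>) / 2] z))"
      unfolding P by (rule aux_div2[OF Bnz])
    finally have R: "post_moment \<alpha> \<gamma> \<delta> n r k = \<dots>" .
    have e1: "1/2 + (real k + 1) / 2 = real (Suc j) + 1/2" "(real k + 2) / 2 = real (Suc j) + 1/2"
      "(real k + 2 * \<alpha> + real n - \<gamma> - \<delta> + 1) / 2 = real (Suc j) + 1/2 + A"
      "(2 * \<alpha> + real n - \<gamma> - \<delta>) / 2 = \<alpha> + (real n - \<gamma> - \<delta>) / 2"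
      unfolding k A_def by (simp_all add: field_simps)
    show "post_moment \<alpha> \<gamma> \<delta> n r k =
       2 * r * Wgd \<gamma> \<delta> n *
       (Beta (1/2 + (real k + 1) / 2) (\<alpha> + (real n - \<gamma> - \<delta> - 1) / 2) *
        hypF [(real k + 2) / 2, (real n - \<gamma>) / 2, (real n - \<delta>) / 2]
             [3/2, (real k + 2 * \<alpha> + real n - \<gamma> - \<delta> + 1) / 2] (r\<^sup>2)
        / (Beta (1/2) (\<alpha> + (real n - \<gamma> - \<delta> - 1) / 2) *
           hypF [(real n - \<gamma> - 1) / 2, (real n - \<delta> - 1) / 2]
                [(2 * \<alpha> + real n - \<gamma> - \<delta>) / 2] (r\<^sup>2)))"
      unfolding e1 R unfolding A_def a_def b_def a2_def b2_def z_def W_def ..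
  qed
  show ?thesis using part1 part2 part3 part4 by blast
qed

end
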